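(* Let $(S_n)_{n\ge0}$ be defined by $S_0=3$, $S_1=1$, $S_2=3$ and $S_{n+1}=S_n+S_{n-1}+S_{n-2}$ for $n\ge 2$. Let $\alpha,\beta,\gamma$ be the roots of $x^3-x^2-x-1=0$ and $C_n=\alpha^n\beta^n+\alpha^n\gamma^n+\beta^n\gamma^n$ for $n\ge0$. Then for all $n\ge 0$, $$S_n^4=S_{4n}+2C_{2n}+4C_n^2+4S_{2n}C_n=S_{4n}-4S_n+4S_{2n}C_n+6C_n^2.$$
   Context: $S_n$ is the generalized Lucas (generalized Tribonacci) sequence. *)

theory Defs
  imports Complex_Main
begin

fun S :: "nat \<Rightarrow> int" where
  "S 0 = 3"
| "S (Suc 0) = 1"
| "S (Suc (Suc 0)) = 3"
| "S (Suc (Suc (Suc n))) = S (Suc (Suc n)) + S (Suc n) + S n"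

definition C :: "complex \<Rightarrow> complex \<Rightarrow> complex \<Rightarrow> nat \<Rightarrow> complex" where
  "C a b c n = a ^ n * b ^ n + a ^ n * c ^ n + b ^ n * c ^ n"

end

theory Submission
  imports Defs
begin

lemma S_pow:
  fixes a b c :: complex
  assumes ha: "a^3 = a^2 + a + 1" and hb: "b^3 = b^2 + b + 1" and hc: "c^3 = c^2 + c + 1"
    and e1: "a + b + c = 1" and e2: "a*b + a*c + b*c = -1"
  shows "(of_int (S n) :: complex) = a^n + b^n + c^n"
proof (induction n rule: S.induct)
  case 1 then show ?case by simp
next
  case 2 then show ?case using e1 by simp
next
  case 3
  have "a^2+b^2+c^2 = (a+b+c)^2 - 2*(a*b+a*c+b*c)" by (simp add: power2_eq_square algebra_simps)
  then show ?case using e1 e2 by (simp add: power2_eq_square)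
next
  case (4 n)
  have "\<And>x::complex. x^3 = x^2+x+1 \<Longrightarrow> x^(Suc (Suc (Suc n))) = x^(Suc (Suc n)) + x^(Suc n) + x^n"
  proof -
    fix x :: complex assume h: "x^3 = x^2+x+1"
    have "x^(Suc (Suc (Suc n))) = x^n * x^3" by (simp add: power_add numeral_3_eq_3)
    also have "\<dots> = x^n*(x^2+x+1)" using h by simp
    finally show "x^(Suc (Suc (Suc n))) = x^(Suc (Suc n)) + x^(Suc n) + x^n"
      by (simp add: algebra_simps power2_eq_square)
  qed
  then show ?case using 4 ha hb hc by simp
qed

lemma vieta: fixes a b c :: complex
  assumes roots: "\<And>x::complex. x ^ 3 - x ^ 2 - x - 1 = (x - a) * (x - b) * (x - c)"
  shows "a+b+c = 1 \<and> a*b+a*c+b*c = -1 \<and> a*b*c = 1"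
proof -
  have r0: "-1 = -(a*b*c)" using roots[of 0] by simp
  have r1: "-2 = (1-a)*(1-b)*(1-c)" using roots[of 1] by simp
  have rm: "-2 = (-1-a)*(-1-b)*(-1-c)" using roots[of "-1"] by simp
  have e3: "a*b*c = 1" using r0 by simp
  have r1': "-2 = 1 - (a+b+c) + (a*b+a*c+b*c) - a*b*c" using r1 by algebra
  have rm': "2 = 1 + (a+b+c) + (a*b+a*c+b*c) + a*b*c" using rm by algebra
  have e2: "a*b+a*c+b*c = -1" using r1' rm' e3 by algebra
  have e1: "a+b+c = 1" using r1' e2 e3 by algebra
  show ?thesis using e1 e2 e3 by simp
qed

theorem mainTheorem9:
  fixes \<alpha> \<beta> \<gamma> :: complex and n :: nat
  assumes roots: "\<And>x::complex. x ^ 3 - x ^ 2 - x - 1 = (x - \<alpha>) * (x - \<beta>) * (x - \<gamma>)"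
  shows "(of_int (S n) :: complex) ^ 4
           = of_int (S (4 * n)) + 2 * C \<alpha> \<beta> \<gamma> (2 * n) + 4 * (C \<alpha> \<beta> \<gamma> n) ^ 2
             + 4 * of_int (S (2 * n)) * C \<alpha> \<beta> \<gamma> n
       \<and> of_int (S (4 * n)) + 2 * C \<alpha> \<beta> \<gamma> (2 * n) + 4 * (C \<alpha> \<beta> \<gamma> n) ^ 2
             + 4 * of_int (S (2 * n)) * C \<alpha> \<beta> \<gamma> n
           = of_int (S (4 * n)) - 4 * of_int (S n) + 4 * of_int (S (2 * n)) * C \<alpha> \<beta> \<gamma> n
             + 6 * (C \<alpha> \<beta> \<gamma> n) ^ 2"
proof -
  let ?a = \<alpha> and ?b = \<beta> and ?c = \<gamma>
  have V: "?a+?b+?c = 1 \<and> ?a*?b+?a*?c+?b*?c = -1 \<and> ?a*?b*?c = 1" by (rule vieta[OF roots])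
  have e1: "?a+?b+?c = 1" and e2: "?a*?b+?a*?c+?b*?c = -1" and e3: "?a*?b*?c = 1" using V by auto
  have cube: "\<And>x. x = ?a \<or> x = ?b \<or> x = ?c \<Longrightarrow> x^3 = x^2+x+1"
  proof -
    fix x assume "x = ?a \<or> x = ?b \<or> x = ?c"
    then have "x ^ 3 - x ^ 2 - x - 1 = 0" using roots[of x] by auto
    then show "x^3 = x^2+x+1" by (simp add: algebra_simps)
  qed
  have Sp: "\<And>m. (of_int (S m) :: complex) = ?a^m + ?b^m + ?c^m"
    by (rule S_pow) (use cube e1 e2 in auto)
  define x where "x = ?a^n"
  define y where "y = ?b^n"
  define z where "z = ?c^n"
  have xyz: "x*y*z = 1" unfolding x_def y_def z_def using e3 by (metis power_mult_distrib power_one)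
  have pn: "?a^(2*n) = x^2" "?b^(2*n) = y^2" "?c^(2*n) = z^2"
    "?a^(4*n) = x^4" "?b^(4*n) = y^4" "?c^(4*n) = z^4"
    unfolding x_def y_def z_def by (simp_all add: power_mult[symmetric] mult.commute)
  have Cn: "C ?a ?b ?c n = x*y+x*z+y*z" unfolding C_def x_def y_def z_def by simp
  have C2n: "C ?a ?b ?c (2*n) = x^2*y^2+x^2*z^2+y^2*z^2" unfolding C_def using pn by simp
  have Sn: "(of_int (S n)::complex) = x+y+z" using Sp[of n] x_def y_def z_def by simp
  have S2: "(of_int (S (2*n))::complex) = x^2+y^2+z^2" using Sp[of "2*n"] pn by simp
  have S4: "(of_int (S (4*n))::complex) = x^4+y^4+z^4" using Sp[of "4*n"] pn by simp
  have id1: "(x+y+z)^4 = (x^4+y^4+z^4) + 2*(x^2*y^2+x^2*z^2+y^2*z^2) + 4*(x*y+x*z+y*z)^2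
             + 4*(x^2+y^2+z^2)*(x*y+x*z+y*z)"
    by algebra
  have id2: "2*(x^2*y^2+x^2*z^2+y^2*z^2) = 2*(x*y+x*z+y*z)^2 - 4*(x+y+z)*(x*y*z)"
    by algebra
  have f1: "(x+y+z)^4 = (x^4+y^4+z^4) + 2*(x^2*y^2+x^2*z^2+y^2*z^2) + 4*(x*y+x*z+y*z)^2
             + 4*(x^2+y^2+z^2)*(x*y+x*z+y*z)" using id1 by simp
  have f2: "2*(x^2*y^2+x^2*z^2+y^2*z^2) = 2*(x*y+x*z+y*z)^2 - 4*(x+y+z)" using id2 xyz by simp
  have f3: "(x^4+y^4+z^4) + 2*(x^2*y^2+x^2*z^2+y^2*z^2) + 4*(x*y+x*z+y*z)^2
             + 4*(x^2+y^2+z^2)*(x*y+x*z+y*z) = (x^4+y^4+z^4) - 4*(x+y+z) + 4*(x^2+y^2+z^2)*(x*y+x*z+y*z) + 6*(x*y+x*z+y*z)^2"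
    unfolding f2 by simp
  show ?thesis unfolding Sn S2 S4 Cn C2n using f1 f3 by simp
qed

end
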